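(* Let $b\ge1$ and let $q=(q_1,q_2,\ldots,q_k)$ be an ordered partition of $b$ (so $k\ge 1$). The number of ways $q$ can be embedded into an ordered partition of $b$ (counting all nontrivial embeddings of $q$ into all ordered partitions $r$ of $b$, plus the one trivial embedding of $q$ into itself) is \[ 1+\frac{q_1+2k-2}{q_1+k-1}\binom{q_1+k-1}{k-1}2^{q_1-1}. \] Equivalently, this is the number of cards for $b$ balls whose left partition is $q$.
   Context: For an integer $b\ge 0$, an ordered partition of $b$ is a finite sequence $(q_1,\ldots,q_k)$ of positive integers summing to $b$ (for $b=0$ the only one is the empty sequence). An ordered partition $(q_1,\ldots,q_k)$ with $k\ge1$ is nontrivially embedded into an ordered partition $(r_1,\ldots,r_\ell)$ by a choice of indices $1\le i_2<i_3<\cdots<i_k\le \ell$ with $q_j\le r_{i_j}$ for $2\le j\le k$; different index tuples count as different embeddings. The trivial embedding of $q$ into $r$ exists only when $q=r$. A card for $b$ balls is either (i) a trivial card, given by an ordered partition $q$ of $b$, whose left and right partitions are both $q$; or (ii) a throw card, given by ordered partitions $q=(q_1,\ldots,q_k)$ ($k\ge1$) and $r=(r_1,\ldots,r_\ell)$ of $b$ together with a nontrivial embedding $(i_2,\ldots,i_k)$ of $q$ into $r$; its left partition is $q$ and its right partition is $r$. Different index tuples give different cards, and a throw card is distinct from the trivial card even when $q=r$. *)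

theory Defs
  imports Complex_Main
begin

definition ordered_partition :: "nat \<Rightarrow> nat list \<Rightarrow> bool" where
  "ordered_partition b q \<longleftrightarrow> (\<forall>x\<in>set q. 0 < x) \<and> sum_list q = b"

text \<open>A nontrivial embedding of q = (q_1,...,q_k), k \<ge> 1, into r = (r_1,...,r_l):
  indices i_2 < ... < i_k in {1..l} with q_j \<le> r_(i_j).  Represented 0-based:
  the list ix has length k-1, ix!(j-2) is i_j - 1, strictly increasing, all < length r,
  and q!(j+1) \<le> r!(ix!j) for j < k-1.\<close>
definition nontriv_embedding :: "nat list \<Rightarrow> nat list \<Rightarrow> nat list \<Rightarrow> bool" where
  "nontriv_embedding q r ix \<longleftrightarrow>
     q \<noteq> [] \<and> length ix = length q - 1 \<and> sorted_wrt (<) ix \<and>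
     (\<forall>i\<in>set ix. i < length r) \<and>
     (\<forall>j<length ix. q ! (j + 1) \<le> r ! (ix ! j))"

definition throw_cards_from :: "nat \<Rightarrow> nat list \<Rightarrow> (nat list \<times> nat list) set" where
  "throw_cards_from b q = {(r, ix). ordered_partition b r \<and> nontriv_embedding q r ix}"

definition num_embeddings :: "nat \<Rightarrow> nat list \<Rightarrow> nat" where
  "num_embeddings b q = 1 + card (throw_cards_from b q)"

end

theory Submission imports Defs begin

definition valid :: "nat list \<Rightarrow> nat list \<Rightarrow> nat list \<Rightarrow> bool" where
 "valid p r ix \<longleftrightarrow> length ix = length p \<and> sorted_wrt (<) ix \<and> (\<forall>i\<in>set ix. i < length r)
    \<and> (\<forall>j<length ix. p!j \<le> r!(ix!j))"

definition S :: "nat \<Rightarrow> nat list \<Rightarrow> (nat list \<times> nat list) set" where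
 "S b p = {(r, ix). ordered_partition b r \<and> valid p r ix}"

lemma valid_map_Suc: "valid p (x#r) (map Suc ix) \<longleftrightarrow> valid p r ix"
  unfolding valid_def by (auto simp: sorted_wrt_map)

lemma valid_zero: "valid (p0#p) (x#r) (0 # map Suc ix) \<longleftrightarrow> p0 \<le> x \<and> valid p r ix"
proof -
  have "(\<forall>j<Suc (length ix). (p0#p)!j \<le> (x#r)!((0 # map Suc ix)!j)) \<longleftrightarrow>
        p0 \<le> x \<and> (\<forall>j<length ix. p!j \<le> r!(ix!j))"
    by (auto simp: less_Suc_eq_0_disj)
  then show ?thesis unfolding valid_def by (auto simp: sorted_wrt_map)
qed

lemma pos_map: "\<forall>i\<in>set xs. 0 < (i::nat) \<Longrightarrow> xs = map Suc (map (\<lambda>i. i - 1) xs)"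
  by (induct xs) auto

lemma valid_Nil: "valid p [] ix \<longleftrightarrow> ix = [] \<and> p = []"
  unfolding valid_def by (cases ix) auto

lemma valid_Cons: "valid p (x#r) ix \<longleftrightarrow> (\<exists>ix'. ix = map Suc ix' \<and> valid p r ix') \<or>
   (\<exists>p0 p' ix'. p = p0#p' \<and> ix = 0 # map Suc ix' \<and> p0 \<le> x \<and> valid p' r ix')"
proof
  assume v: "valid p (x#r) ix"
  show "(\<exists>ix'. ix = map Suc ix' \<and> valid p r ix') \<or>
   (\<exists>p0 p' ix'. p = p0#p' \<and> ix = 0 # map Suc ix' \<and> p0 \<le> x \<and> valid p' r ix')"
  proof (cases ix)
    case Nil
    then show ?thesis using v valid_map_Suc[of p x r "[]"] by auto
  next
    case (Cons i ixs)
    have sw: "sorted_wrt (<) (i#ixs)" using v Cons unfolding valid_def by auto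
    show ?thesis
    proof (cases "i = 0")
      case True
      then have "\<forall>j\<in>set ixs. 0 < j" using sw by auto
      then have e: "ixs = map Suc (map (\<lambda>i. i - 1) ixs)" by (rule pos_map)
      obtain p0 p' where pp: "p = p0 # p'" using v Cons unfolding valid_def by (cases p) auto
      have "valid (p0#p') (x#r) (0 # map Suc (map (\<lambda>i. i - 1) ixs))"
        using v Cons True pp e by simp
      then show ?thesis using valid_zero pp Cons True e by blast
    next
      case False
      then have "\<forall>j\<in>set ix. 0 < j" using sw Cons by auto
      then have e: "ix = map Suc (map (\<lambda>i. i - 1) ix)" by (rule pos_map)
      have "valid p (x#r) (map Suc (map (\<lambda>i. i - 1) ix))" using v e by simp
      then show ?thesis using valid_map_Suc e by blast
    qed
  qed
next
  assume "(\<exists>ix'. ix = map Suc ix' \<and> valid p r ix') \<or>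
   (\<exists>p0 p' ix'. p = p0#p' \<and> ix = 0 # map Suc ix' \<and> p0 \<le> x \<and> valid p' r ix')"
  then show "valid p (x#r) ix" using valid_map_Suc valid_zero by auto
qed

lemma len_le_sum: "\<forall>x\<in>set r. 0 < (x::nat) \<Longrightarrow> length r \<le> sum_list r"
  by (induct r) auto

lemma finite_S: "finite (S b p)"
proof -
  have "S b p \<subseteq> {r. set r \<subseteq> {..b} \<and> length r \<le> b} \<times> {ix. set ix \<subseteq> {..b} \<and> length ix \<le> length p}"
  proof
    fix z assume "z \<in> S b p"
    then obtain r ix where z: "z = (r, ix)" and op: "ordered_partition b r" and v: "valid p r ix"
      unfolding S_def by auto
    have l: "length r \<le> b" using op len_le_sum unfolding ordered_partition_def by auto
    have "set r \<subseteq> {..b}" using op member_le_sum_list[of _ r] unfolding ordered_partition_def by auto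
    moreover have "set ix \<subseteq> {..b}" using v l unfolding valid_def by force
    ultimately show "z \<in> {r. set r \<subseteq> {..b} \<and> length r \<le> b} \<times> {ix. set ix \<subseteq> {..b} \<and> length ix \<le> length p}"
      using z l v unfolding valid_def by auto
  qed
  moreover have "finite ({r. set r \<subseteq> {..b} \<and> length r \<le> b} \<times> {ix. set ix \<subseteq> {..b} \<and> length ix \<le> length p})"
    by (intro finite_cartesian_product finite_lists_length_le) auto
  ultimately show ?thesis by (rule finite_subset)
qed

lemma op_Cons: "ordered_partition b (x#r) \<longleftrightarrow> 0 < x \<and> x \<le> b \<and> ordered_partition (b - x) r"
  unfolding ordered_partition_def by auto

lemma op_Nil: "ordered_partition b [] \<longleftrightarrow> b = 0"
  unfolding ordered_partition_def by auto

lemma S_0: "S 0 p = (if p = [] then {([],[])} else {})"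
proof -
  have o: "ordered_partition 0 r \<longleftrightarrow> r = []" for r
    unfolding ordered_partition_def by (cases r) auto
  have "S 0 p = {(r, ix). r = [] \<and> ix = [] \<and> p = []}" unfolding S_def o
    by (rule Collect_cong) (auto simp: valid_Nil)
  then show ?thesis by auto
qed

lemma card_S_Suc:
  assumes pos: "\<forall>x\<in>set p. 0 < x"
  shows "card (S (Suc b) p) = card (S b p) + (if b = 0 then 0 else card (S b p)) +
     (case p of [] \<Rightarrow> 0 | p0 # p' \<Rightarrow> if p0 \<le> Suc b then card (S (Suc b - p0) p') else 0)"
proof -
  define fA where "fA = (\<lambda>(r::nat list, ix::nat list). (Suc 0 # r, map Suc ix))"
  define fB where "fB = (\<lambda>(r::nat list, ix::nat list). (Suc (hd r) # tl r, ix))"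
  define fC where "fC = (\<lambda>p0 (r::nat list, ix::nat list). (p0 # r, 0 # map Suc ix))"
  define A where "A = fA ` S b p"
  define B where "B = fB ` (S b p \<inter> {(r, ix). r \<noteq> []})"
  define C where "C = (case p of [] \<Rightarrow> {} | p0 # p' \<Rightarrow> if p0 \<le> Suc b then fC p0 ` S (Suc b - p0) p' else {})"
  have eq: "S (Suc b) p = A \<union> B \<union> C"
  proof
    show "S (Suc b) p \<subseteq> A \<union> B \<union> C"
    proof
      fix z assume "z \<in> S (Suc b) p"
      then obtain r ix where z: "z = (r, ix)" and op: "ordered_partition (Suc b) r" and v: "valid p r ix"
        unfolding S_def by auto
      obtain x r' where r: "r = x # r'" using op by (cases r) (auto simp: op_Nil)
      have x: "0 < x" "x \<le> Suc b" and op': "ordered_partition (Suc b - x) r'" using op r by (auto simp: op_Cons)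
      have vv: "(\<exists>ix'. ix = map Suc ix' \<and> valid p r' ix') \<or>
   (\<exists>p0 p' ix'. p = p0#p' \<and> ix = 0 # map Suc ix' \<and> p0 \<le> x \<and> valid p' r' ix')"
        using v unfolding r by (rule valid_Cons[THEN iffD1])
      consider (u) ix' where "ix = map Suc ix'" "valid p r' ix'"
        | (m) p0 p' ix' where "p = p0#p'" "ix = 0 # map Suc ix'" "p0 \<le> x" "valid p' r' ix'"
        using vv by blast
      then show "z \<in> A \<union> B \<union> C"
      proof cases
        case u
        show ?thesis
        proof (cases "x = 1")
          case True
          then have "(r', ix') \<in> S b p" using op' u unfolding S_def by auto
          moreover have "z = fA (r', ix')" using z r u True unfolding fA_def by auto
          ultimately have "z \<in> A" unfolding A_def by (rule rev_image_eqI)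
          then show ?thesis by (rule UnI1[OF UnI1])
        next
          case False
          have "ordered_partition b ((x - 1) # r')" using op' x False by (simp add: op_Cons)
          moreover have "valid p ((x - 1) # r') ix" using u valid_Cons by blast
          ultimately have "((x - 1) # r', ix) \<in> S b p" unfolding S_def by simp
          then have "((x - 1) # r', ix) \<in> S b p \<inter> {(r, ix). r \<noteq> []}" by simp
          moreover have "z = fB ((x - 1) # r', ix)" using z r x False unfolding fB_def by auto
          ultimately have "z \<in> B" unfolding B_def by (rule rev_image_eqI)
          then show ?thesis by (rule UnI1[OF UnI2])
        qed
      next
        case m
        show ?thesis
        proof (cases "x = p0")
          case True
          then have "(r', ix') \<in> S (Suc b - p0) p'" using op' m unfolding S_def by auto
          moreover have "z = fC p0 (r', ix')" using z r m True unfolding fC_def by auto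
          ultimately have "z \<in> fC p0 ` S (Suc b - p0) p'" by (rule rev_image_eqI)
          then have "z \<in> C" unfolding C_def using m x True by simp
          then show ?thesis by (rule UnI2)
        next
          case False
          have "0 < p0" using pos m by auto
          have "ordered_partition b ((x - 1) # r')" using op' x False \<open>0 < p0\<close> m by (simp add: op_Cons)
          moreover have "valid p ((x - 1) # r') ix" using m False valid_Cons[of p "x - 1" r' ix] by auto
          ultimately have "((x - 1) # r', ix) \<in> S b p" unfolding S_def by simp
          then have "((x - 1) # r', ix) \<in> S b p \<inter> {(r, ix). r \<noteq> []}" by simp
          moreover have "z = fB ((x - 1) # r', ix)" using z r x False unfolding fB_def by auto
          ultimately have "z \<in> B" unfolding B_def by (rule rev_image_eqI)
          then show ?thesis by (rule UnI1[OF UnI2])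
        qed
      qed
    qed
  next
    show "A \<union> B \<union> C \<subseteq> S (Suc b) p"
    proof -
      have "A \<subseteq> S (Suc b) p" unfolding A_def fA_def S_def
        by (auto simp: op_Cons valid_map_Suc)
      moreover have "B \<subseteq> S (Suc b) p"
      proof
        fix z assume "z \<in> B"
        then obtain r ix where z: "z = fB (r, ix)" and rS: "(r, ix) \<in> S b p" and rn: "r \<noteq> []"
          unfolding B_def by auto
        obtain x r' where r: "r = x # r'" using rn by (cases r) auto
        have op: "ordered_partition b (x#r')" and v: "valid p (x#r') ix" using rS r unfolding S_def by auto
        have "valid p (Suc x # r') ix" using v by (auto simp: valid_Cons)
        moreover have "ordered_partition (Suc b) (Suc x # r')" using op by (auto simp: op_Cons)
        ultimately show "z \<in> S (Suc b) p" using z r unfolding fB_def S_def by auto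
      qed
      moreover have "C \<subseteq> S (Suc b) p"
      proof (cases p)
        case Nil then show ?thesis unfolding C_def by auto
      next
        case (Cons p0 p')
        then have "0 < p0" using pos by auto
        then show ?thesis unfolding C_def fC_def S_def using Cons
          by (auto simp: op_Cons valid_zero)
      qed
      ultimately show ?thesis by blast
    qed
  qed
  have fin: "finite (S n p')" for n p' by (rule finite_S)
  have dAB: "A \<inter> B = {}"
  proof -
    { fix z assume "z \<in> A" "z \<in> B"
      then obtain r ix where "z = fA (r, ix)" by (auto simp: A_def)
      moreover obtain r2 ix2 where "z = fB (r2, ix2)" "(r2, ix2) \<in> S b p" "r2 \<noteq> []"
        using \<open>z \<in> B\<close> by (auto simp: B_def)
      moreover have "hd r2 > 0" using \<open>(r2, ix2) \<in> S b p\<close> \<open>r2 \<noteq> []\<close>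
        unfolding S_def ordered_partition_def by (cases r2) auto
      ultimately have False unfolding fA_def fB_def by auto }
    then show ?thesis by blast
  qed
  have dC: "(A \<union> B) \<inter> C = {}"
  proof (cases p)
    case Nil then show ?thesis unfolding C_def by auto
  next
    case (Cons p0 p')
    { fix z assume zC: "z \<in> C" and zAB: "z \<in> A \<union> B"
      from zC obtain r ix where zc: "z = fC p0 (r, ix)" unfolding C_def using Cons by (auto split: if_splits)
      from zAB have False
      proof
        assume "z \<in> A" then show False using zc unfolding A_def fA_def fC_def by auto
      next
        assume "z \<in> B"
        then obtain r2 ix2 where z2: "z = fB (r2, ix2)" "(r2, ix2) \<in> S b p" "r2 \<noteq> []"
          by (auto simp: B_def)
        obtain x r' where r2: "r2 = x # r'" using z2 by (cases r2) auto
        have v: "valid p (x # r') ix2" using z2 r2 unfolding S_def by auto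
        have ix2: "ix2 = 0 # map Suc ix" and p0: "p0 = Suc x" using zc z2 r2 unfolding fB_def fC_def by auto
        from v ix2 Cons have "p0 \<le> x" by (auto simp: valid_Cons)
        then show False using p0 by simp
      qed }
    then show ?thesis by blast
  qed
  have injA: "inj fA"
  proof (rule injI)
    fix u v assume "fA u = fA v"
    then show "u = v" unfolding fA_def
      by (cases u, cases v) (simp add: inj_map_eq_map)
  qed
  have cA: "card A = card (S b p)" unfolding A_def
    using injA by (simp add: card_image inj_on_subset)
  have cB: "card B = (if b = 0 then 0 else card (S b p))"
  proof (cases "b = 0")
    case True
    then have "S b p \<inter> {(r, ix). r \<noteq> []} = {}" by (simp add: S_0)
    then show ?thesis using True unfolding B_def by simp
  next
    case False
    have ne: "fst u \<noteq> []" if "u \<in> S b p" for u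
    proof
      assume "fst u = []"
      then have "ordered_partition b []" using that unfolding S_def by (cases u) simp
      then show False using False by (simp add: op_Nil)
    qed
    then have e: "S b p \<inter> {(r, ix). r \<noteq> []} = S b p" by fastforce
    have "inj_on fB (S b p)"
    proof (rule inj_onI)
      fix u v assume uv: "u \<in> S b p" "v \<in> S b p" "fB u = fB v"
      obtain r1 i1 where u: "u = (r1, i1)" by (cases u)
      obtain r2 i2 where v: "v = (r2, i2)" by (cases v)
      have "r1 \<noteq> []" using ne[of u] uv(1) u by simp
      have "r2 \<noteq> []" using ne[of v] uv(2) v by simp
      moreover have "Suc (hd r1) = Suc (hd r2)" "tl r1 = tl r2" "i1 = i2"
        using uv(3) u v unfolding fB_def by simp_all
      ultimately have "r1 = r2" using \<open>r1 \<noteq> []\<close> by (metis list.collapse Suc_inject)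
      then show "u = v" using u v \<open>i1 = i2\<close> by simp
    qed
    then show ?thesis using False e unfolding B_def by (simp add: card_image)
  qed
  have cC: "card C = (case p of [] \<Rightarrow> 0 | p0 # p' \<Rightarrow> if p0 \<le> Suc b then card (S (Suc b - p0) p') else 0)"
  proof (cases p)
    case Nil then show ?thesis unfolding C_def by simp
  next
    case (Cons p0 p')
    have "inj_on (fC p0) X" for X by (auto simp: inj_on_def fC_def)
    then show ?thesis unfolding C_def using Cons by (simp add: card_image)
  qed
  have fA: "finite A" "finite B" "finite C" unfolding A_def B_def C_def using fin
    by (auto split: list.splits)
  have "card (S (Suc b) p) = card A + card B + card C"
    unfolding eq using fA dAB dC by (simp add: card_Un_disjoint)
  then show ?thesis using cA cB cC by simp
qed


fun H :: "nat \<Rightarrow> nat \<Rightarrow> nat" where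
  "H 0 m = 1"
| "H (Suc 0) 0 = 1"
| "H (Suc (Suc n)) 0 = 2 * H (Suc n) 0"
| "H (Suc n) (Suc m) = 2 * H n (Suc m) + H (Suc n) m"

lemma card_S:
  "\<forall>x\<in>set p. 0 < x \<Longrightarrow>
   card (S b p) = (if sum_list p \<le> b then H (b - sum_list p) (length p) else 0)"
proof (induction b arbitrary: p rule: less_induct)
  case (less b)
  show ?case
  proof (cases b)
    case 0
    have "sum_list p \<le> 0 \<longleftrightarrow> p = []" using less.prems by (cases p) auto
    then show ?thesis using 0 by (simp add: S_0)
  next
    case (Suc c)
    have IH1: "card (S c p) = (if sum_list p \<le> c then H (c - sum_list p) (length p) else 0)"
      using less.IH[of c p] less.prems Suc by simp
    show ?thesis
    proof (cases p)
      case Nil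
      have "card (S (Suc c) []) = H (Suc c) 0"
        using card_S_Suc[of "[]" c] IH1 Nil by (cases c) simp_all
      then show ?thesis using Nil Suc by simp
    next
      case (Cons p0 p')
      have p0: "0 < p0" using less.prems Cons by simp
      have pos': "\<forall>x\<in>set p'. 0 < x" using less.prems Cons by simp
      define s' where "s' = sum_list p'"
      define m' where "m' = length p'"
      have IH2: "card (S (Suc c - p0) p') = (if s' \<le> Suc c - p0 then H (Suc c - p0 - s') m' else 0)"
        using less.IH[of "Suc c - p0" p'] pos' p0 Suc unfolding s'_def m'_def by simp
      have rec: "card (S (Suc c) p) = card (S c p) + (if c = 0 then 0 else card (S c p)) +
         (if p0 \<le> Suc c then card (S (Suc c - p0) p') else 0)"
        using card_S_Suc[OF less.prems, of c] Cons by simp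
      have IH1': "card (S c p) = (if p0 + s' \<le> c then H (c - (p0 + s')) (Suc m') else 0)"
        using IH1 Cons unfolding s'_def m'_def by simp
      have goal: "card (S (Suc c) p) = (if p0 + s' \<le> Suc c then H (Suc c - (p0 + s')) (Suc m') else 0)"
      proof (cases "p0 + s' \<le> c")
        case True
        then have c0: "c \<noteq> 0" using p0 by simp
        have e: "Suc c - (p0 + s') = Suc (c - (p0 + s'))" using True by simp
        have e2: "Suc c - p0 - s' = Suc (c - (p0 + s'))" using True by simp
        have e3: "s' \<le> Suc c - p0" using True by simp
        show ?thesis using rec IH1' IH2 True c0 e e2 e3 by simp
      next
        case False
        show ?thesis
        proof (cases "p0 + s' = Suc c")
          case True
          then have e3: "s' \<le> Suc c - p0" "Suc c - p0 - s' = 0" "p0 \<le> Suc c" by simp_all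
          show ?thesis using rec IH1' IH2 False True e3 by simp
        next
          case False2: False
          then show ?thesis using rec IH1' IH2 False by auto
        qed
      qed
      then show ?thesis using Cons Suc unfolding s'_def m'_def by simp
    qed
  qed
qed

lemma H1: "H (Suc 0) m = 2 * m + 1"
  by (induct m) auto

lemma binom_aux: "(Suc (n + m) choose m) = (n + m choose m) + (if m = 0 then 0 else (n + m) choose (m - 1))"
  by (cases m) simp_all

lemma Hc: "H (Suc n) m = 2 ^ n * ((Suc (n + m) choose m) + (if m = 0 then 0 else (n + m) choose (m - 1)))"
proof (induction n arbitrary: m)
  case 0
  have "(Suc m choose m) = Suc m" using binomial_symmetric[of 1 "Suc m"] by simp
  moreover have "m \<noteq> 0 \<Longrightarrow> (m choose (m - 1)) = m" using binomial_symmetric[of 1 m] by simp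
  ultimately show ?case by (simp add: H1)
next
  case (Suc n)
  note IHn = Suc.IH
  show ?case
  proof (induction m)
    case 0
    then show ?case using IHn[of 0] by simp
  next
    case (Suc m)
    have a: "(Suc (Suc (Suc n + m)) choose Suc m) = (Suc (Suc n + m) choose Suc m) + (Suc (Suc n + m) choose m)"
      by simp
    have b: "(Suc (Suc n + m) choose m) = (Suc n + m choose m) + (if m = 0 then 0 else (Suc n + m) choose (m - 1))"
      by (rule binom_aux)
    have "H (Suc (Suc n)) (Suc m) = 2 * H (Suc n) (Suc m) + H (Suc (Suc n)) m" by simp
    also have "\<dots> = 2 * (2 ^ n * ((Suc (n + Suc m) choose Suc m) + ((n + Suc m) choose m)))
       + 2 ^ Suc n * ((Suc (Suc n + m) choose m) + (if m = 0 then 0 else (Suc n + m) choose (m - 1)))"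
      using IHn[of "Suc m"] Suc.IH by simp
    finally show ?case using a b by (simp add: algebra_simps)
  qed
qed


theorem lemma3:
  fixes b :: nat and q :: "nat list"
  assumes "b \<ge> 1" and "ordered_partition b q"
  defines "k \<equiv> length q" and "q1 \<equiv> hd q"
  shows "finite (throw_cards_from b q) \<and>
         real (num_embeddings b q) =
           1 + real (q1 + 2 * k - 2) / real (q1 + k - 1)
               * real ((q1 + k - 1) choose (k - 1)) * 2 ^ (q1 - 1)"
proof -
  have pos: "\<forall>x\<in>set q. 0 < x" and sq: "sum_list q = b"
    using assms(2) unfolding ordered_partition_def by auto
  obtain q0 t where q: "q = q0 # t" using sq assms(1) by (cases q) auto
  have q0: "0 < q0" using pos q by simp
  have post: "\<forall>x\<in>set t. 0 < x" using pos q by simp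
  have T: "throw_cards_from b q = S b t"
    unfolding throw_cards_from_def S_def nontriv_embedding_def valid_def q by simp
  obtain n where n: "q0 = Suc n" using q0 by (cases q0) auto
  define m where "m = length t"
  have cardT: "card (throw_cards_from b q) = H (Suc n) m"
  proof -
    have "b - sum_list t = Suc n" using sq q n by simp
    then show ?thesis using card_S[OF post, of b] sq q n unfolding T m_def by simp
  qed
  have k: "k = Suc m" unfolding k_def m_def q by simp
  have q1: "q1 = Suc n" unfolding q1_def q n by simp
  have key: "real (Suc n + m) * real (H (Suc n) m) =
       real (Suc n + 2 * m) * real (Suc n + m choose m) * 2 ^ n"
  proof (cases m)
    case 0 then show ?thesis by (simp add: Hc)
  next
    case (Suc m')
    have abs: "Suc m' * (Suc (Suc (n + m')) choose Suc m') = Suc (Suc (n + m')) * (Suc (n + m') choose m')"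
      by (rule Suc_times_binomial)
    have "real (Suc n + m) * real (H (Suc n) m) = 2 ^ n * (real (Suc n + m) * real (Suc (n + m) choose m)
          + real (Suc (Suc (n + m'))) * real (Suc (n + m') choose m'))"
      using Suc by (simp add: Hc algebra_simps)
    also have "\<dots> = 2 ^ n * (real (Suc n + m) * real (Suc (n + m) choose m)
          + real (Suc m') * real (Suc (Suc (n + m')) choose Suc m'))"
      using abs by (metis of_nat_mult)
    also have "\<dots> = real (Suc n + 2 * m) * real (Suc n + m choose m) * 2 ^ n"
      using Suc by (simp add: algebra_simps)
    finally show ?thesis .
  qed
  have "real (num_embeddings b q) = 1 + real (H (Suc n) m)"
    unfolding num_embeddings_def using cardT by simp
  also have "\<dots> = 1 + real (Suc n + 2 * m) / real (Suc n + m) * real (Suc n + m choose m) * 2 ^ n"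
    using key by (simp add: field_simps)
  finally have "real (num_embeddings b q) = 1 + real (Suc n + 2 * m) / real (Suc n + m) * real (Suc n + m choose m) * 2 ^ n" .
  moreover have "q1 + 2 * k - 2 = Suc n + 2 * m" "q1 + k - 1 = Suc n + m" "k - 1 = m" "q1 - 1 = n"
    using k q1 by simp_all
  ultimately show ?thesis using finite_S[of b t] T by simp
qed

end
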